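(* Let $a\in C(\mathbb{R}^2)$ be $\mathbb{Z}^2$-periodic with $\inf a>0$, $\gamma>0$, $b\ge0$, $p\ge2$, $q\ge2p$. If $(u_n)\subset X$ satisfies $I(u_n)\to d>0$ and $\|I'(u_n)\|_{X'}(1+\|u_n\|_X)\to0$, then $(u_n)$ is bounded in $H^1(\mathbb{R}^2)$.
   Context: $X:=\{u\in H^1(\mathbb{R}^2):\int\log(1+|x|)|u|^p<\infty\}$, norm $\|u\|_X:=\|u\|_{H^1}+(\int\log(1+|x|)|u|^p)^{1/p}$, $\|u\|_{H^1}^2:=\int(|\nabla u|^2+a(x)u^2)$. $I(u):=\frac12\|u\|_{H^1}^2+\frac{\gamma}{4p\pi}\iint\log(|x-y|)|u|^p(x)|u|^p(y)\,dx\,dy-\frac bq\int|u|^q$. *)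

theory Defs
  imports "HOL-Analysis.Analysis"
begin

type_synonym R2 = "real ^ 2"

definition test_fun :: "(R2 \<Rightarrow> real) \<Rightarrow> (R2 \<Rightarrow> R2 \<Rightarrow> real) \<Rightarrow> bool" where
  "test_fun phi Dphi \<longleftrightarrow>
     (\<forall>x. (phi has_derivative Dphi x) (at x)) \<and>
     (\<forall>v. continuous_on UNIV (\<lambda>x. Dphi x v)) \<and>
     (\<exists>R. \<forall>x. norm x > R \<longrightarrow> phi x = 0)"

definition weak_grad :: "(R2 \<Rightarrow> real) \<Rightarrow> (R2 \<Rightarrow> R2) \<Rightarrow> bool" where
  "weak_grad u g \<longleftrightarrow>
     (\<forall>phi Dphi. test_fun phi Dphi \<longrightarrow>
        (\<forall>i. (LINT x|lborel. u x * Dphi x (axis i 1)) = - (LINT x|lborel. g x $ i * phi x)))"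

definition L2grad :: "(R2 \<Rightarrow> real) \<Rightarrow> (R2 \<Rightarrow> R2) \<Rightarrow> bool" where
  "L2grad u g \<longleftrightarrow> g \<in> borel_measurable lborel \<and>
     integrable lborel (\<lambda>x. (norm (g x))\<^sup>2) \<and> weak_grad u g"

definition H1 :: "(R2 \<Rightarrow> real) \<Rightarrow> bool" where
  "H1 u \<longleftrightarrow> u \<in> borel_measurable lborel \<and> integrable lborel (\<lambda>x. (u x)\<^sup>2) \<and> (\<exists>g. L2grad u g)"

definition grad :: "(R2 \<Rightarrow> real) \<Rightarrow> (R2 \<Rightarrow> R2)" where
  "grad u = (SOME g. L2grad u g)"

definition H1norm :: "(R2 \<Rightarrow> real) \<Rightarrow> (R2 \<Rightarrow> real) \<Rightarrow> real" where
  "H1norm a u = sqrt (LINT x|lborel. (norm (grad u x))\<^sup>2 + a x * (u x)\<^sup>2)"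

definition inX :: "real \<Rightarrow> (R2 \<Rightarrow> real) \<Rightarrow> bool" where
  "inX p u \<longleftrightarrow> H1 u \<and> integrable lborel (\<lambda>x. ln (1 + norm x) * \<bar>u x\<bar> powr p)"

definition Xnorm :: "(R2 \<Rightarrow> real) \<Rightarrow> real \<Rightarrow> (R2 \<Rightarrow> real) \<Rightarrow> real" where
  "Xnorm a p u = H1norm a u + (LINT x|lborel. ln (1 + norm x) * \<bar>u x\<bar> powr p) powr (1 / p)"

definition Ifun :: "(R2 \<Rightarrow> real) \<Rightarrow> real \<Rightarrow> real \<Rightarrow> real \<Rightarrow> real \<Rightarrow> (R2 \<Rightarrow> real) \<Rightarrow> real" where
  "Ifun a \<gamma> b p q u =
     1 / 2 * (H1norm a u)\<^sup>2
     + \<gamma> / (4 * p * pi) *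
         (LINT x|lborel. LINT y|lborel. ln (norm (x - y)) * \<bar>u x\<bar> powr p * \<bar>u y\<bar> powr p)
     - b / q * (LINT x|lborel. \<bar>u x\<bar> powr q)"

definition X_deriv :: "(R2 \<Rightarrow> real) \<Rightarrow> real \<Rightarrow> ((R2 \<Rightarrow> real) \<Rightarrow> real) \<Rightarrow> (R2 \<Rightarrow> real)
    \<Rightarrow> ((R2 \<Rightarrow> real) \<Rightarrow> real) \<Rightarrow> bool" where
  "X_deriv a p F u L \<longleftrightarrow>
     (\<forall>v w. inX p v \<longrightarrow> inX p w \<longrightarrow> L (\<lambda>x. v x + w x) = L v + L w) \<and>
     (\<forall>c v. inX p v \<longrightarrow> L (\<lambda>x. c * v x) = c * L v) \<and>
     (\<exists>K. \<forall>v. inX p v \<longrightarrow> \<bar>L v\<bar> \<le> K * Xnorm a p v) \<and>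
     (\<forall>\<epsilon>>0. \<exists>\<delta>>0. \<forall>v. inX p v \<longrightarrow> Xnorm a p v < \<delta> \<longrightarrow>
        \<bar>F (\<lambda>x. u x + v x) - F u - L v\<bar> \<le> \<epsilon> * Xnorm a p v)"

definition dual_normX :: "(R2 \<Rightarrow> real) \<Rightarrow> real \<Rightarrow> ((R2 \<Rightarrow> real) \<Rightarrow> real) \<Rightarrow> real" where
  "dual_normX a p L = Sup {\<bar>L v\<bar> | v. inX p v \<and> Xnorm a p v \<le> 1}"

end

theory Submission
  imports Defs
begin



definition C1fun :: "(R2 \<Rightarrow> real) \<Rightarrow> (R2 \<Rightarrow> R2 \<Rightarrow> real) \<Rightarrow> bool" where
  "C1fun f Df \<longleftrightarrow> (\<forall>x. (f has_derivative Df x) (at x)) \<and> (\<forall>v. continuous_on UNIV (\<lambda>x. Df x v))"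

lemma C1fun_cont: "C1fun f Df \<Longrightarrow> continuous_on UNIV f"
  unfolding C1fun_def
  by (meson continuous_at_imp_continuous_on has_derivative_continuous)

lemma C1fun_lin: "C1fun (\<lambda>x. \<alpha> * x $ i + \<beta>) (\<lambda>x v. \<alpha> * v $ i)"
  unfolding C1fun_def
  by (auto intro!: derivative_eq_intros bounded_linear_imp_has_derivative[OF bounded_linear_vec_nth] continuous_intros)

lemma C1fun_mult:
  assumes "C1fun f Df" "C1fun g Dg"
  shows "C1fun (\<lambda>x. f x * g x) (\<lambda>x v. f x * Dg x v + Df x v * g x)"
proof -
  have cf: "continuous_on UNIV f" "continuous_on UNIV g" using assms C1fun_cont by auto
  show ?thesis
  using assms cf unfolding C1fun_def
  by (auto intro!: derivative_eq_intros continuous_intros)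
qed

lemma C1fun_comp:
  assumes "C1fun f Df" "\<And>s. (\<psi> has_real_derivative \<psi>' s) (at s)" "continuous_on UNIV \<psi>'"
  shows "C1fun (\<lambda>x. \<psi> (f x)) (\<lambda>x v. \<psi>' (f x) * Df x v)"
proof -
  have cf: "continuous_on UNIV f" using assms C1fun_cont by auto
  have d: "((\<lambda>x. \<psi> (f x)) has_derivative (\<lambda>v. \<psi>' (f x) * Df x v)) (at x)" for x
  proof -
    have "(\<psi> has_derivative (\<lambda>h. \<psi>' (f x) * h)) (at (f x))"
      using assms(2)[of "f x"] by (simp add: has_field_derivative_def)
    moreover have "(f has_derivative Df x) (at x)" using assms(1) unfolding C1fun_def by auto
    ultimately show ?thesis using has_derivative_compose[of f "Df x" x UNIV \<psi> "\<lambda>h. \<psi>' (f x) * h"]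
      by simp
  qed
  have "continuous_on UNIV (\<lambda>x. \<psi>' (f x) * Df x v)" for v
    using assms(1) unfolding C1fun_def
    by (auto intro!: continuous_intros continuous_on_compose2[OF assms(3) cf])
  with d show ?thesis unfolding C1fun_def by auto
qed

definition sqp :: "real \<Rightarrow> real" where "sqp t = (max 0 t)^2"

lemma sqp_deriv: "(sqp has_real_derivative 2 * max 0 t) (at t)"
proof (cases "t = 0")
  case True
  have "((\<lambda>h. (sqp (0 + h) - sqp 0) / h) \<longlongrightarrow> 0) (at 0)"
  proof -
    have "((\<lambda>h::real. max 0 h) \<longlongrightarrow> max 0 0) (at 0)"
      by (intro tendsto_intros)
    moreover have "\<forall>\<^sub>F h in at (0::real). (sqp (0 + h) - sqp 0) / h = max 0 h"
      unfolding eventually_at_filter by (auto simp: sqp_def power2_eq_square max_def)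
    ultimately show ?thesis by (simp add: tendsto_cong)
  qed
  then show ?thesis using True by (simp add: DERIV_def)
next
  case False
  show ?thesis
  proof (cases "t > 0")
    case True
    have "((\<lambda>s. s^2) has_real_derivative 2 * t) (at t)"
      by (auto intro!: derivative_eq_intros)
    moreover have "\<forall>\<^sub>F s in nhds t. s^2 = sqp s"
      using eventually_nhds_in_open[of "{0<..}" t] True
      by (auto simp: sqp_def elim!: eventually_mono)
    ultimately show ?thesis using True
      by (subst (asm) DERIV_cong_ev[OF refl _ refl]) (auto simp: max_def)
  next
    case False2: False
    have "((\<lambda>s. 0) has_real_derivative 0) (at t)"
      by (auto intro!: derivative_eq_intros)
    moreover have "\<forall>\<^sub>F s in nhds t. 0 = sqp s"
      using eventually_nhds_in_open[of "{..<0}" t] False2 False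
      by (auto simp: sqp_def elim!: eventually_mono)
    ultimately show ?thesis using False2
      by (subst (asm) DERIV_cong_ev[OF refl _ refl]) (auto simp: max_def)
  qed
qed

lemma sqp_cont: "continuous_on UNIV (\<lambda>t::real. 2 * max 0 t)"
  by (intro continuous_intros)

lemma C1_sqp_lin: "\<exists>D. C1fun (\<lambda>x. sqp (\<alpha> * x $ i + \<beta>)) D"
  using C1fun_comp[OF C1fun_lin sqp_deriv sqp_cont] by blast

definition Gb :: "R2 \<Rightarrow> R2 \<Rightarrow> R2 \<Rightarrow> real" where
  "Gb l r x = sqp (1 * x$1 + - l$1) * sqp (-1 * x$1 + r$1) * sqp (1 * x$2 + - l$2) * sqp (-1 * x$2 + r$2)"

lemma C1_Gb: "\<exists>D. C1fun (Gb l r) D"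
proof -
  obtain D1 D2 D3 D4 where
    "C1fun (\<lambda>x. sqp (1 * x$1 + - l$1)) D1" "C1fun (\<lambda>x. sqp (-1 * x$1 + r$1)) D2"
    "C1fun (\<lambda>x. sqp (1 * x$2 + - l$2)) D3" "C1fun (\<lambda>x. sqp (-1 * x$2 + r$2)) D4"
    using C1_sqp_lin by metis
  from C1fun_mult[OF C1fun_mult[OF C1fun_mult[OF this(1,2)] this(3)] this(4)]
  show ?thesis unfolding Gb_def[abs_def] by blast
qed

lemma sqp_pos: "sqp t > 0 \<longleftrightarrow> t > 0" "sqp t \<ge> 0"
  by (auto simp: sqp_def max_def)

lemma pos_prod_iff: "(a::real) \<ge> 0 \<Longrightarrow> b \<ge> 0 \<Longrightarrow> a * b > 0 \<longleftrightarrow> a > 0 \<and> b > 0"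
  by (simp add: zero_less_mult_iff)

lemma Gb_nonneg: "Gb l r x \<ge> 0"
  unfolding Gb_def by (intro mult_nonneg_nonneg sqp_pos(2))

lemma Gb_pos: "Gb l r x > 0 \<longleftrightarrow> x \<in> box l r"
proof -
  have "Gb l r x > 0 \<longleftrightarrow> sqp (1 * x$1 + - l$1) > 0 \<and> sqp (-1 * x$1 + r$1) > 0 \<and>
     sqp (1 * x$2 + - l$2) > 0 \<and> sqp (-1 * x$2 + r$2) > 0"
    unfolding Gb_def by (simp add: pos_prod_iff sqp_pos(2) del: sqp_pos(1))
  also have "\<dots> \<longleftrightarrow> x \<in> box l r"
    by (auto simp: sqp_pos mem_box_cart forall_2)
  finally show ?thesis .
qed

definition psi :: "real \<Rightarrow> real \<Rightarrow> real" where "psi k s = k * s^2 / (1 + k * s^2)"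

lemma psi_deriv: "k \<ge> 0 \<Longrightarrow> (psi k has_real_derivative (2 * k * s / (1 + k * s^2)^2)) (at s)"
proof -
  assume k: "k \<ge> 0"
  have "0 \<le> k * s^2" using k by simp
  then have ne: "1 + k * s^2 \<noteq> 0" by linarith
  have d1: "((\<lambda>s. k * s^2) has_real_derivative k * (2 * s)) (at s)"
    by (auto intro!: derivative_eq_intros)
  have d2: "((\<lambda>s. 1 + k * s^2) has_real_derivative k * (2 * s)) (at s)"
    by (auto intro!: derivative_eq_intros)
  from DERIV_divide[OF d1 d2 ne]
  have "((\<lambda>s. k * s^2 / (1 + k * s^2)) has_real_derivative
     (k * (2 * s) * (1 + k * s^2) - k * s^2 * (k * (2 * s))) / ((1 + k * s^2) * (1 + k * s^2))) (at s)" .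
  moreover have "(k * (2 * s) * (1 + k * s^2) - k * s^2 * (k * (2 * s))) / ((1 + k * s^2) * (1 + k * s^2))
     = 2 * k * s / (1 + k * s^2)^2"
    by (simp add: power2_eq_square algebra_simps)
  ultimately show ?thesis unfolding psi_def[abs_def] by simp
qed

lemma psi_cont: "(k::real) \<ge> 0 \<Longrightarrow> continuous_on UNIV (\<lambda>s. 2 * k * s / (1 + k * s^2)^2)"
proof -
  assume k: "k \<ge> 0"
  have "(1 + k * s^2)^2 \<noteq> 0" for s
  proof -
    have "0 \<le> k * s^2" using k by simp
    then show ?thesis by simp
  qed
  then show ?thesis by (intro continuous_intros) auto
qed

lemma box_bounded_R: "\<exists>R. \<forall>x::R2. norm x > R \<longrightarrow> x \<notin> box l r"
proof -
  obtain a where a: "\<forall>x\<in>box l r. norm x \<le> a" using bounded_box[of l r] unfolding bounded_iff by blast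
  show ?thesis by (rule exI[of _ a]) (use a in force)
qed

lemma test_box: "k \<ge> 0 \<Longrightarrow> \<exists>D. test_fun (\<lambda>x. psi k (Gb l r x)) D"
proof -
  assume k: "k \<ge> 0"
  obtain D where "C1fun (Gb l r) D" using C1_Gb by blast
  from C1fun_comp[OF this psi_deriv[OF k] psi_cont[OF k]]
  have c: "C1fun (\<lambda>x. psi k (Gb l r x)) (\<lambda>x v. 2 * k * Gb l r x / (1 + k * (Gb l r x)^2)^2 * D x v)" .
  obtain R where R: "\<forall>x::R2. norm x > R \<longrightarrow> x \<notin> box l r" using box_bounded_R by blast
  have "\<forall>x. norm x > R \<longrightarrow> psi k (Gb l r x) = 0"
    using R Gb_pos Gb_nonneg by (auto simp: psi_def) (metis less_eq_real_def)
  with c show ?thesis unfolding test_fun_def C1fun_def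
    by (intro exI[where x="\<lambda>x v. 2 * k * Gb l r x / (1 + k * (Gb l r x)^2)^2 * D x v"]) blast
qed

lemma psi_bounds: "k \<ge> 0 \<Longrightarrow> 0 \<le> psi k s \<and> psi k s \<le> 1"
proof -
  assume "k \<ge> 0"
  then have a: "0 \<le> k * s^2" by simp
  then have p: "0 < 1 + k * s^2" by linarith
  have "k * s^2 / (1 + k * s^2) \<le> 1" using p by (simp add: divide_le_eq)
  moreover have "0 \<le> k * s^2 / (1 + k * s^2)" using a p by (simp add: divide_nonneg_pos)
  ultimately show ?thesis unfolding psi_def by blast
qed

lemma psi_lim: "(\<lambda>n. psi (real n) (Gb l r x)) \<longlonglongrightarrow> indicator (box l r) x"
proof (cases "x \<in> box l r")
  case True
  define s where "s = Gb l r x"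
  have s: "s > 0" using True Gb_pos s_def by auto
  have "(\<lambda>n. 1 - 1 / (1 + real n * s^2)) \<longlonglongrightarrow> 1 - 0"
  proof (intro tendsto_intros)
    have "filterlim (\<lambda>n. 1 + real n * s^2) at_top sequentially"
    proof -
      have "filterlim (\<lambda>n. s^2 * real n) at_top sequentially"
        using s by (intro filterlim_tendsto_pos_mult_at_top[OF tendsto_const] filterlim_real_sequentially) auto
      then show ?thesis by (intro filterlim_tendsto_add_at_top[OF tendsto_const]) (simp add: mult.commute)
    qed
    then show "(\<lambda>n. 1 / (1 + real n * s^2)) \<longlonglongrightarrow> 0"
      by (simp add: tendsto_divide_0 tendsto_inverse_0_at_top divide_inverse_commute)
  qed
  moreover have "psi (real n) s = 1 - 1 / (1 + real n * s^2)" for n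
  proof -
    have d: "1 + real n * s^2 \<noteq> 0" using s
      by (metis add_pos_nonneg less_numeral_extra(1,3) of_nat_0_le_iff zero_le_mult_iff zero_le_power2)
    show ?thesis unfolding psi_def using d by (simp add: field_simps)
  qed
  ultimately show ?thesis using True s_def by simp
next
  case False
  then have "Gb l r x = 0" using Gb_pos Gb_nonneg by (metis less_eq_real_def)
  then show ?thesis using False by (simp add: psi_def)
qed




lemma ae_zero_of_boxes:
  fixes F :: "R2 \<Rightarrow> real"
  assumes int: "integrable lborel F"
    and z: "\<And>l r. (LINT x|lborel. F x * indicator (box l r) x) = 0"
  shows "AE x in lborel. F x = 0"
proof -
  have Fm[measurable]: "F \<in> borel_measurable lborel" using int by auto
  define P where "P = (\<lambda>x. ennreal (F x))"
  define N where "N = (\<lambda>x. ennreal (- F x))"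
  have Pm[measurable]: "P \<in> borel_measurable lborel" "N \<in> borel_measurable lborel"
    unfolding P_def N_def by auto
  have finP: "(\<integral>\<^sup>+x. P x * indicator A x \<partial>lborel) < \<infinity>" for A
  proof -
    have "(\<integral>\<^sup>+x. P x * indicator A x \<partial>lborel) \<le> (\<integral>\<^sup>+x. ennreal (norm (F x)) \<partial>lborel)"
      by (intro nn_integral_mono) (auto simp: P_def split: split_indicator)
    also have "\<dots> < \<infinity>" using int unfolding integrable_iff_bounded by auto
    finally show ?thesis .
  qed
  have finN: "(\<integral>\<^sup>+x. N x * indicator A x \<partial>lborel) < \<infinity>" for A
  proof -
    have "(\<integral>\<^sup>+x. N x * indicator A x \<partial>lborel) \<le> (\<integral>\<^sup>+x. ennreal (norm (F x)) \<partial>lborel)"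
      by (intro nn_integral_mono) (auto simp: N_def split: split_indicator)
    also have "\<dots> < \<infinity>" using int unfolding integrable_iff_bounded by auto
    finally show ?thesis .
  qed
  have boxeq: "(\<integral>\<^sup>+x. P x * indicator (box l r) x \<partial>lborel) = (\<integral>\<^sup>+x. N x * indicator (box l r) x \<partial>lborel)" for l r
  proof -
    have i2: "integrable lborel (\<lambda>x. F x * indicator (box l r) x)"
      using integrable_real_mult_indicator[OF _ int, of "box l r"] by (simp add: mult.commute)
    have e1: "(\<integral>\<^sup>+x. ennreal (F x * indicator (box l r) x) \<partial>lborel) = (\<integral>\<^sup>+x. P x * indicator (box l r) x \<partial>lborel)"
      by (intro nn_integral_cong) (auto simp: P_def split: split_indicator)
    have e2: "(\<integral>\<^sup>+x. ennreal (- (F x * indicator (box l r) x)) \<partial>lborel) = (\<integral>\<^sup>+x. N x * indicator (box l r) x \<partial>lborel)"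
      by (intro nn_integral_cong) (auto simp: N_def split: split_indicator)
    from real_lebesgue_integral_def[OF i2] z[of l r] e1 e2
    have "enn2real (\<integral>\<^sup>+x. P x * indicator (box l r) x \<partial>lborel) = enn2real (\<integral>\<^sup>+x. N x * indicator (box l r) x \<partial>lborel)"
      by simp
    moreover have "ennreal (enn2real (\<integral>\<^sup>+x. P x * indicator (box l r) x \<partial>lborel)) = (\<integral>\<^sup>+x. P x * indicator (box l r) x \<partial>lborel)"
      using finP[of "box l r"] by (intro ennreal_enn2real) (simp add: less_top)
    moreover have "ennreal (enn2real (\<integral>\<^sup>+x. N x * indicator (box l r) x \<partial>lborel)) = (\<integral>\<^sup>+x. N x * indicator (box l r) x \<partial>lborel)"
      using finN[of "box l r"] by (intro ennreal_enn2real) (simp add: less_top)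
    ultimately show ?thesis by metis
  qed
  have sb: "sets (borel::R2 measure) = sigma_sets UNIV (range (\<lambda>(a, b). box a b))"
    by (subst borel_eq_box) (rule sets_measure_of, simp)
  have "density lborel P = density lborel N"
  proof (rule measure_eqI_generator_eq[where E="range (\<lambda>(a, b). box a b)" and \<Omega>=UNIV
        and A="\<lambda>n. box (- (real n *\<^sub>R One)) (real n *\<^sub>R One)"])
    show "Int_stable (range (\<lambda>(a, b). box a b :: R2 set))"
      by (auto simp: Int_stable_def box_Int_box)
    show "range (\<lambda>(a, b). box a b) \<subseteq> Pow (UNIV :: R2 set)" by auto
    show "sets (density lborel P) = sigma_sets UNIV (range (\<lambda>(a, b). box a b))"
      "sets (density lborel N) = sigma_sets UNIV (range (\<lambda>(a, b). box a b))"
      using sb by simp_all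
    show "range (\<lambda>n. box (- (real n *\<^sub>R One)) (real n *\<^sub>R One) :: R2 set) \<subseteq> range (\<lambda>(a, b). box a b)"
      by auto
    show "(\<Union>n. box (- (real n *\<^sub>R One)) (real n *\<^sub>R One) :: R2 set) = UNIV"
      by (rule UN_box_eq_UNIV)
    show "emeasure (density lborel P) (box (- (real i *\<^sub>R One)) (real i *\<^sub>R One)) \<noteq> \<infinity>" for i
      using finP by (simp add: emeasure_density less_top)
    show "emeasure (density lborel P) X = emeasure (density lborel N) X" if "X \<in> range (\<lambda>(a, b). box a b)" for X
      using that boxeq by (auto simp: emeasure_density)
  qed
  then have "AE x in lborel. P x = N x"
    by (intro sigma_finite_measure.density_unique[OF sigma_finite_lborel]) auto
  then show ?thesis
  proof eventually_elim
    case (elim x)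
    show ?case
    proof (cases "F x \<ge> 0")
      case True
      then have "ennreal (- F x) = 0" by (simp add: ennreal_eq_0_iff)
      with elim True show ?thesis by (simp add: P_def N_def)
    next
      case False
      then have "ennreal (F x) = 0" by (simp add: ennreal_eq_0_iff)
      with elim False show ?thesis by (simp add: P_def N_def)
    qed
  qed
qed

lemma ae_zero_of_boxes_loc:
  fixes f :: "R2 \<Rightarrow> real"
  assumes int: "\<And>l r. integrable lborel (\<lambda>x. f x * indicator (box l r) x)"
    and z: "\<And>l r. (LINT x|lborel. f x * indicator (box l r) x) = 0"
  shows "AE x in lborel. f x = 0"
proof -
  define B where "B = (\<lambda>n::nat. box (- (real n *\<^sub>R One)) (real n *\<^sub>R One) :: R2 set)"
  have "AE x in lborel. f x * indicator (B n) x = 0" for n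
  proof (rule ae_zero_of_boxes)
    show "integrable lborel (\<lambda>x. f x * indicator (B n) x)" using int B_def by simp
    fix l r :: R2
    have "box l r \<inter> B n = box (\<Sum>i\<in>Basis. max (l\<bullet>i) ((- (real n *\<^sub>R One))\<bullet>i) *\<^sub>R i) (\<Sum>i\<in>Basis. min (r\<bullet>i) ((real n *\<^sub>R One)\<bullet>i) *\<^sub>R i)"
      unfolding B_def by (rule box_Int_box)
    then obtain l' r' where "box l r \<inter> B n = box l' r'" by blast
    then have "(\<lambda>x. f x * indicator (B n) x * indicator (box l r) x) = (\<lambda>x. f x * indicator (box l' r') x)"
      by (auto simp: fun_eq_iff split: split_indicator)
    then show "(LINT x|lborel. f x * indicator (B n) x * indicator (box l r) x) = 0"
      using z by simp
  qed
  then have "AE x in lborel. \<forall>n. f x * indicator (B n) x = 0"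
    by (subst AE_all_countable) blast
  then show ?thesis
  proof eventually_elim
    case (elim x)
    obtain n where "x \<in> B n" using UN_box_eq_UNIV B_def by blast
    then show ?case using elim[rule_format, of n] by simp
  qed
qed




lemma meas_nth[measurable]: "g \<in> borel_measurable M \<Longrightarrow> (\<lambda>x. g x $ i) \<in> borel_measurable M"
  by (rule borel_measurable_continuous_on[of "\<lambda>y. y $ i"]) (auto intro: continuous_intros)

lemma abs_le_sq1: "\<bar>a::real\<bar> \<le> a^2 + 1"
proof (cases "\<bar>a\<bar> \<le> 1")
  case True then show ?thesis by (simp add: add_increasing)
next
  case False
  then have "\<bar>a\<bar> * 1 \<le> \<bar>a\<bar> * \<bar>a\<bar>" by (intro mult_left_mono) auto
  then show ?thesis by (simp add: power2_eq_square abs_mult_self)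
qed

lemma int_box: "integrable lborel (indicator (box l r) :: R2 \<Rightarrow> real)"
  using emeasure_bounded_finite[OF bounded_box[of l r]]
  by (intro integrable_real_indicator) (auto simp: infinity_ennreal_def)

lemma int_sq_ind:
  fixes f c :: "R2 \<Rightarrow> real"
  assumes fm: "f \<in> borel_measurable lborel" and fi: "integrable lborel (\<lambda>x. (f x)^2)"
    and cm: "c \<in> borel_measurable lborel" and cb: "\<And>x. \<bar>c x\<bar> \<le> indicator (box l r) x"
  shows "integrable lborel (\<lambda>x. f x * c x)"
proof (rule Bochner_Integration.integrable_bound[of _ "\<lambda>x. (f x)^2 + indicator (box l r) x"])
  show "integrable lborel (\<lambda>x. (f x)^2 + indicator (box l r) x)"
    using fi int_box by (rule Bochner_Integration.integrable_add)
  show "(\<lambda>x. f x * c x) \<in> borel_measurable lborel" using fm cm by measurable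
  show "AE x in lborel. norm (f x * c x) \<le> norm ((f x)^2 + indicator (box l r) x)"
  proof (intro AE_I2)
    fix x
    have "\<bar>f x * c x\<bar> \<le> \<bar>f x\<bar> * indicator (box l r) x"
      unfolding abs_mult by (intro mult_left_mono cb) auto
    also have "\<dots> \<le> (f x)^2 + indicator (box l r) x"
      using abs_le_sq1[of "f x"] by (auto split: split_indicator)
    finally show "norm (f x * c x) \<le> norm ((f x)^2 + indicator (box l r) x)" by simp
  qed
qed

lemma psiGb_meas: "k \<ge> 0 \<Longrightarrow> (\<lambda>x. psi k (Gb l r x)) \<in> borel_measurable lborel"
proof -
  assume "k \<ge> 0"
  then obtain D where "test_fun (\<lambda>x. psi k (Gb l r x)) D" using test_box by blast
  then have "continuous_on UNIV (\<lambda>x. psi k (Gb l r x))"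
    unfolding test_fun_def by (meson continuous_at_imp_continuous_on has_derivative_continuous)
  then show ?thesis
    using borel_measurable_continuous_onI by (simp add: measurable_lborel1)
qed

lemma psiGb_bound: "k \<ge> 0 \<Longrightarrow> \<bar>psi k (Gb l r x)\<bar> \<le> indicator (box l r) x"
proof -
  assume k: "k \<ge> 0"
  show ?thesis
  proof (cases "x \<in> box l r")
    case True then show ?thesis using psi_bounds[OF k] by auto
  next
    case False
    then have "Gb l r x = 0" using Gb_pos Gb_nonneg by (metis less_eq_real_def)
    then show ?thesis using False by (simp add: psi_def)
  qed
qed

lemma sq_int_comp:
  assumes "L2grad u g"
  shows "(\<lambda>x. g x $ i) \<in> borel_measurable lborel" "integrable lborel (\<lambda>x. (g x $ i)^2)"
proof -
  have gm: "g \<in> borel_measurable lborel" and gi: "integrable lborel (\<lambda>x. (norm (g x))\<^sup>2)"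
    using assms unfolding L2grad_def by auto
  show "(\<lambda>x. g x $ i) \<in> borel_measurable lborel" using gm by measurable
  show "integrable lborel (\<lambda>x. (g x $ i)^2)"
  proof (rule Bochner_Integration.integrable_bound[OF gi])
    show "(\<lambda>x. (g x $ i)^2) \<in> borel_measurable lborel" using gm by measurable
    show "AE x in lborel. norm ((g x $ i)^2) \<le> norm ((norm (g x))\<^sup>2)"
    proof (intro AE_I2)
      fix x
      have "\<bar>g x $ i\<bar>^2 \<le> (norm (g x))^2"
        by (rule power_mono) (auto simp: component_le_norm_cart)
      then show "norm ((g x $ i)^2) \<le> norm ((norm (g x))\<^sup>2)" by simp
    qed
  qed
qed

lemma L2grad_unique:
  assumes g1: "L2grad u g1" and g2: "L2grad u g2"
  shows "AE x in lborel. g1 x = g2 x"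
proof -
  have comp: "AE x in lborel. g1 x $ i - g2 x $ i = 0" for i
  proof (rule ae_zero_of_boxes_loc)
    fix l r :: R2
    note m1 = sq_int_comp[OF g1, of i] and m2 = sq_int_comp[OF g2, of i]
    have ib1: "integrable lborel (\<lambda>x. g1 x $ i * indicator (box l r) x)"
      using int_sq_ind[OF m1, of "indicator (box l r)" l r] by auto
    have ib2: "integrable lborel (\<lambda>x. g2 x $ i * indicator (box l r) x)"
      using int_sq_ind[OF m2, of "indicator (box l r)" l r] by auto
    show ib: "integrable lborel (\<lambda>x. (g1 x $ i - g2 x $ i) * indicator (box l r) x)"
      using Bochner_Integration.integrable_diff[OF ib1 ib2] by (simp add: algebra_simps)
    define h where "h = (\<lambda>x. g1 x $ i - g2 x $ i)"
    have hm[measurable]: "h \<in> borel_measurable lborel" unfolding h_def using m1 m2 by measurable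
    have zero: "(LINT x|lborel. h x * psi (real n) (Gb l r x)) = 0" for n
    proof -
      obtain D where D: "test_fun (\<lambda>x. psi (real n) (Gb l r x)) D" using test_box[of "real n"] by auto
      have "(LINT x|lborel. g1 x $ i * psi (real n) (Gb l r x)) = (LINT x|lborel. g2 x $ i * psi (real n) (Gb l r x))"
      proof -
        have w1: "weak_grad u g1" and w2: "weak_grad u g2" using g1 g2 unfolding L2grad_def by auto
        have "(LINT x|lborel. u x * D x (axis i 1)) = - (LINT x|lborel. g1 x $ i * psi (real n) (Gb l r x))"
          using w1 D unfolding weak_grad_def by blast
        moreover have "(LINT x|lborel. u x * D x (axis i 1)) = - (LINT x|lborel. g2 x $ i * psi (real n) (Gb l r x))"
          using w2 D unfolding weak_grad_def by blast
        ultimately show ?thesis by simp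
      qed
      moreover have "integrable lborel (\<lambda>x. g1 x $ i * psi (real n) (Gb l r x))"
        by (rule int_sq_ind[OF m1 psiGb_meas psiGb_bound]) auto
      moreover have "integrable lborel (\<lambda>x. g2 x $ i * psi (real n) (Gb l r x))"
        by (rule int_sq_ind[OF m2 psiGb_meas psiGb_bound]) auto
      ultimately show ?thesis unfolding h_def left_diff_distrib
        by (simp add: Bochner_Integration.integral_diff)
    qed
    have "(\<lambda>n. LINT x|lborel. h x * psi (real n) (Gb l r x)) \<longlonglongrightarrow> (LINT x|lborel. h x * indicator (box l r) x)"
    proof (rule integral_dominated_convergence[where w="\<lambda>x. \<bar>h x * indicator (box l r) x\<bar>"])
      show "(\<lambda>x. h x * indicator (box l r) x) \<in> borel_measurable lborel" by measurable
      show "(\<lambda>x. h x * psi (real n) (Gb l r x)) \<in> borel_measurable lborel" for n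
        using hm psiGb_meas[of "real n" l r] by measurable
      show "integrable lborel (\<lambda>x. \<bar>h x * indicator (box l r) x\<bar>)"
        using ib unfolding h_def by (rule integrable_abs)
      show "AE x in lborel. (\<lambda>n. h x * psi (real n) (Gb l r x)) \<longlonglongrightarrow> h x * indicator (box l r) x"
        by (intro AE_I2 tendsto_mult_left psi_lim)
      show "AE x in lborel. norm (h x * psi (real n) (Gb l r x)) \<le> \<bar>h x * indicator (box l r) x\<bar>" for n
      proof (intro AE_I2)
        fix x
        have "\<bar>h x * psi (real n) (Gb l r x)\<bar> \<le> \<bar>h x\<bar> * indicator (box l r) x"
          unfolding abs_mult by (intro mult_left_mono psiGb_bound) auto
        then show "norm (h x * psi (real n) (Gb l r x)) \<le> \<bar>h x * indicator (box l r) x\<bar>"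
          by (simp add: abs_mult)
      qed
    qed
    then have "(\<lambda>n. 0) \<longlonglongrightarrow> (LINT x|lborel. h x * indicator (box l r) x)"
      using zero by simp
    then have "0 = (LINT x|lborel. h x * indicator (box l r) x)"
      by (rule LIMSEQ_unique[OF tendsto_const])
    then show "(LINT x|lborel. (g1 x $ i - g2 x $ i) * indicator (box l r) x) = 0"
      unfolding h_def by simp
  qed
  have "AE x in lborel. \<forall>i. g1 x $ i - g2 x $ i = 0"
    using comp by (subst AE_all_countable) blast
  then show ?thesis by eventually_elim (simp add: vec_eq_iff)
qed




lemma cont_meas: "continuous_on UNIV (a :: R2 \<Rightarrow> real) \<Longrightarrow> a \<in> borel_measurable lborel"
  using borel_measurable_continuous_onI by (simp add: measurable_lborel1)

lemma L2grad_scale: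
  assumes "L2grad u g"
  shows "L2grad (\<lambda>x. c * u x) (\<lambda>x. c *\<^sub>R g x)"
proof -
  have gm: "g \<in> borel_measurable lborel" and gi: "integrable lborel (\<lambda>x. (norm (g x))\<^sup>2)"
    and w: "weak_grad u g" using assms unfolding L2grad_def by auto
  have "integrable lborel (\<lambda>x. c^2 * (norm (g x))\<^sup>2)" using gi by simp
  then have "integrable lborel (\<lambda>x. (norm (c *\<^sub>R g x))\<^sup>2)" by (simp add: power_mult_distrib)
  moreover have "(\<lambda>x. c *\<^sub>R g x) \<in> borel_measurable lborel" using gm by measurable
  moreover have "weak_grad (\<lambda>x. c * u x) (\<lambda>x. c *\<^sub>R g x)"
    unfolding weak_grad_def
  proof (intro allI impI)
    fix phi Dphi i assume t: "test_fun phi Dphi"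
    have "(LINT x|lborel. c * u x * Dphi x (axis i 1)) = c * (LINT x|lborel. u x * Dphi x (axis i 1))"
      by (simp add: mult.assoc)
    also have "\<dots> = c * - (LINT x|lborel. g x $ i * phi x)" using w t unfolding weak_grad_def by simp
    also have "\<dots> = - (LINT x|lborel. (c *\<^sub>R g x) $ i * phi x)" by (simp add: mult.assoc)
    finally show "(LINT x|lborel. c * u x * Dphi x (axis i 1)) = - (LINT x|lborel. (c *\<^sub>R g x) $ i * phi x)" .
  qed
  ultimately show ?thesis unfolding L2grad_def by auto
qed

lemma H1_scale: "H1 u \<Longrightarrow> H1 (\<lambda>x. c * u x)"
  unfolding H1_def
proof (elim conjE exE, intro conjI)
  fix g assume "u \<in> borel_measurable lborel" "integrable lborel (\<lambda>x. (u x)\<^sup>2)" "L2grad u g"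
  then show "(\<lambda>x. c * u x) \<in> borel_measurable lborel" "integrable lborel (\<lambda>x. (c * u x)\<^sup>2)"
    "\<exists>g. L2grad (\<lambda>x. c * u x) g"
    using L2grad_scale by (auto simp: power_mult_distrib)
qed

lemma grad_L2: "H1 u \<Longrightarrow> L2grad u (grad u)"
  unfolding H1_def grad_def by (auto intro: someI[where P="L2grad u"])

lemma H1norm_scale:
  assumes u: "H1 u" and am: "a \<in> borel_measurable lborel"
  shows "H1norm a (\<lambda>x. c * u x) = \<bar>c\<bar> * H1norm a u"
proof -
  have um: "u \<in> borel_measurable lborel" using u unfolding H1_def by auto
  have g: "L2grad u (grad u)" using grad_L2[OF u] .
  have gc: "L2grad (\<lambda>x. c * u x) (grad (\<lambda>x. c * u x))" using grad_L2[OF H1_scale[OF u]] .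
  have ae: "AE x in lborel. grad (\<lambda>x. c * u x) x = c *\<^sub>R grad u x"
    using L2grad_unique[OF gc L2grad_scale[OF g]] .
  have m1: "grad (\<lambda>x. c * u x) \<in> borel_measurable lborel" using gc unfolding L2grad_def by auto
  have m2: "grad u \<in> borel_measurable lborel" using g unfolding L2grad_def by auto
  have "(LINT x|lborel. (norm (grad (\<lambda>x. c * u x) x))\<^sup>2 + a x * (c * u x)\<^sup>2)
      = (LINT x|lborel. c^2 * ((norm (grad u x))\<^sup>2 + a x * (u x)\<^sup>2))"
  proof (rule integral_cong_AE)
    show "(\<lambda>x. (norm (grad (\<lambda>x. c * u x) x))\<^sup>2 + a x * (c * u x)\<^sup>2) \<in> borel_measurable lborel"
      using m1 am um by measurable
    show "(\<lambda>x. c^2 * ((norm (grad u x))\<^sup>2 + a x * (u x)\<^sup>2)) \<in> borel_measurable lborel"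
      using m2 am um by measurable
    show "AE x in lborel. (norm (grad (\<lambda>x. c * u x) x))\<^sup>2 + a x * (c * u x)\<^sup>2 = c^2 * ((norm (grad u x))\<^sup>2 + a x * (u x)\<^sup>2)"
      using ae by eventually_elim (simp add: power_mult_distrib algebra_simps)
  qed
  also have "\<dots> = c^2 * (LINT x|lborel. (norm (grad u x))\<^sup>2 + a x * (u x)\<^sup>2)" by simp
  finally show ?thesis unfolding H1norm_def by (simp only: real_sqrt_mult real_sqrt_abs)
qed

lemma inX_scale:
  assumes "inX p u" shows "inX p (\<lambda>x. c * u x)"
proof -
  have i: "integrable lborel (\<lambda>x. ln (1 + norm x) * \<bar>u x\<bar> powr p)" and h: "H1 u"
    using assms unfolding inX_def by auto
  have "(\<lambda>x. ln (1 + norm x) * \<bar>c * u x\<bar> powr p) = (\<lambda>x. \<bar>c\<bar> powr p * (ln (1 + norm x) * \<bar>u x\<bar> powr p))"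
    by (simp add: abs_mult powr_mult ac_simps)
  then show ?thesis using i H1_scale[OF h] unfolding inX_def by simp
qed

definition Wint :: "real \<Rightarrow> (R2 \<Rightarrow> real) \<Rightarrow> real" where
  "Wint p u = (LINT x|lborel. ln (1 + norm x) * \<bar>u x\<bar> powr p)"

lemma Wint_nonneg: "Wint p u \<ge> 0"
  unfolding Wint_def by (intro Bochner_Integration.integral_nonneg) auto

lemma H1norm_nonneg: "(\<And>x. a x \<ge> 0) \<Longrightarrow> H1norm a u \<ge> 0"
  unfolding H1norm_def by (simp add: Bochner_Integration.integral_nonneg)

lemma Xnorm_nonneg: "(\<And>x. a x \<ge> 0) \<Longrightarrow> Xnorm a p u \<ge> 0"
  unfolding Xnorm_def using H1norm_nonneg by simp

lemma per_bdd:
  fixes a :: "R2 \<Rightarrow> real"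
  assumes ac: "continuous_on UNIV a" and ap: "\<forall>x k. (\<forall>i. k $ i \<in> \<int>) \<longrightarrow> a (x + k) = a x"
  shows "bdd_below (range a)"
proof -
  have "compact (a ` cbox 0 1)"
    by (intro compact_continuous_image continuous_on_subset[OF ac]) auto
  then have b: "bdd_below (a ` cbox 0 1)" by (intro bounded_imp_bdd_below compact_imp_bounded)
  have "range a \<subseteq> a ` cbox 0 1"
  proof
    fix z assume "z \<in> range a"
    then obtain x where z: "z = a x" by auto
    define k :: R2 where "k = (\<chi> i. of_int (floor (x $ i)))"
    have ki: "\<forall>i. k $ i \<in> \<int>" unfolding k_def by simp
    have "x - k \<in> cbox 0 1"
      unfolding k_def mem_box_cart by (auto simp: of_int_floor_le) (smt (verit) real_of_int_floor_add_one_gt)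
    moreover have "a ((x - k) + k) = a (x - k)" using ap ki by blast
    then have "a x = a (x - k)" by simp
    ultimately show "z \<in> a ` cbox 0 1" using z by blast
  qed
  then show ?thesis using b by (rule bdd_below_mono[rotated])
qed

lemma Xnorm_scale:
  assumes u: "inX p u" and am: "a \<in> borel_measurable lborel" and p: "p > 0"
  shows "Xnorm a p (\<lambda>x. c * u x) = \<bar>c\<bar> * Xnorm a p u"
proof -
  have h: "H1 u" using u unfolding inX_def by auto
  have "Wint p (\<lambda>x. c * u x) = \<bar>c\<bar> powr p * Wint p u"
    unfolding Wint_def by (simp add: abs_mult powr_mult mult.left_commute)
  then have "Wint p (\<lambda>x. c * u x) powr (1/p) = \<bar>c\<bar> * Wint p u powr (1/p)"
    using Wint_nonneg[of p u] p by (simp add: powr_mult powr_powr)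
  then show ?thesis unfolding Xnorm_def H1norm_scale[OF h am] Wint_def[symmetric]
    by (simp add: algebra_simps)
qed

definition Bint :: "real \<Rightarrow> (R2 \<Rightarrow> real) \<Rightarrow> real" where
  "Bint p u = (LINT x|lborel. LINT y|lborel. ln (norm (x - y)) * \<bar>u x\<bar> powr p * \<bar>u y\<bar> powr p)"

definition Cint :: "real \<Rightarrow> (R2 \<Rightarrow> real) \<Rightarrow> real" where
  "Cint q u = (LINT x|lborel. \<bar>u x\<bar> powr q)"

lemma Ifun_alt: "Ifun a \<gamma> b p q u = 1/2 * (H1norm a u)\<^sup>2 + \<gamma> / (4 * p * pi) * Bint p u - b / q * Cint q u"
  unfolding Ifun_def Bint_def Cint_def by simp

lemma Ifun_scale:
  assumes u: "H1 u" and am: "a \<in> borel_measurable lborel" and c: "c > 0"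
  shows "Ifun a \<gamma> b p q (\<lambda>x. c * u x) =
    1/2 * c^2 * (H1norm a u)\<^sup>2 + \<gamma> / (4 * p * pi) * (c powr p)^2 * Bint p u - b / q * c powr q * Cint q u"
proof -
  have "Bint p (\<lambda>x. c * u x) = (c powr p)^2 * Bint p u"
  proof -
    have pt: "\<And>x y. ln (norm (x - y)) * \<bar>c * u x\<bar> powr p * \<bar>c * u y\<bar> powr p
       = (c powr p)^2 * (ln (norm (x - y)) * \<bar>u x\<bar> powr p * \<bar>u y\<bar> powr p)"
      using c by (simp add: abs_mult powr_mult power2_eq_square)
    have "Bint p (\<lambda>x. c * u x) = (LINT x|lborel. LINT y|lborel. (c powr p)^2 * (ln (norm (x - y)) * \<bar>u x\<bar> powr p * \<bar>u y\<bar> powr p))"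
      unfolding Bint_def by (simp only: pt)
    also have "\<dots> = (LINT x|lborel. (c powr p)^2 * (LINT y|lborel. ln (norm (x - y)) * \<bar>u x\<bar> powr p * \<bar>u y\<bar> powr p))"
      by (simp only: integral_mult_right_zero)
    also have "\<dots> = (c powr p)^2 * Bint p u"
      unfolding Bint_def by (simp only: integral_mult_right_zero)
    finally show ?thesis .
  qed
  moreover have "Cint q (\<lambda>x. c * u x) = c powr q * Cint q u"
    unfolding Cint_def using c by (simp add: abs_mult powr_mult)
  ultimately show ?thesis unfolding Ifun_alt H1norm_scale[OF u am] using c
    by (simp add: power_mult_distrib)
qed





lemma dual_bound:
  assumes Xd: "X_deriv a p F U Lf" and U: "inX p U" and anon: "\<And>x. a x \<ge> 0"
    and am: "a \<in> borel_measurable lborel" and p: "p > 0"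
  shows "\<bar>Lf U\<bar> \<le> dual_normX a p Lf * Xnorm a p U" "0 \<le> dual_normX a p Lf"
proof -
  have lin0: "\<forall>c v. inX p v \<longrightarrow> Lf (\<lambda>x. c * v x) = c * Lf v"
    using Xd unfolding X_deriv_def by (rule conjunct1[OF conjunct2])
  note lin = lin0[rule_format]
  have "\<exists>K. \<forall>v. inX p v \<longrightarrow> \<bar>Lf v\<bar> \<le> K * Xnorm a p v"
    using Xd unfolding X_deriv_def by (rule conjunct1[OF conjunct2[OF conjunct2]])
  then obtain K where K0: "\<forall>v. inX p v \<longrightarrow> \<bar>Lf v\<bar> \<le> K * Xnorm a p v" by blast
  note K = K0[rule_format]
  define A where "A = {\<bar>Lf v\<bar> | v. inX p v \<and> Xnorm a p v \<le> 1}"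
  have S: "dual_normX a p Lf = Sup A" unfolding dual_normX_def A_def by simp
  have bdd: "bdd_above A"
    unfolding bdd_above_def
  proof (intro exI[of _ "max K 0"] ballI)
    fix y assume "y \<in> A"
    then obtain v where y: "y = \<bar>Lf v\<bar>" and v: "inX p v" "Xnorm a p v \<le> 1" unfolding A_def by blast
    have x0: "0 \<le> Xnorm a p v" by (rule Xnorm_nonneg[OF anon])
    have "K * Xnorm a p v \<le> max K 0"
    proof (cases "K \<ge> 0")
      case True then have "K * Xnorm a p v \<le> K * 1" using v(2) by (intro mult_left_mono) auto
      then show ?thesis by simp
    next
      case False then have "K * Xnorm a p v \<le> 0" using x0 by (simp add: mult_nonpos_nonneg)
      then show ?thesis by simp
    qed
    then show "y \<le> max K 0" using K[OF v(1)] y by simp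
  qed
  have v0: "inX p (\<lambda>x. 0 * U x)" using inX_scale[OF U] .
  have "Xnorm a p (\<lambda>x. 0 * U x) = 0" using Xnorm_scale[OF U am p, of 0] by simp
  then have "\<bar>Lf (\<lambda>x. 0 * U x)\<bar> \<in> A" unfolding A_def using v0 by auto
  moreover have "Lf (\<lambda>x. 0 * U x) = 0" using lin[OF U, of 0] by simp
  ultimately have "0 \<le> Sup A" using cSup_upper[OF _ bdd, of 0] by simp
  then show S0: "0 \<le> dual_normX a p Lf" using S by simp
  show "\<bar>Lf U\<bar> \<le> dual_normX a p Lf * Xnorm a p U"
  proof (cases "Xnorm a p U = 0")
    case True
    then show ?thesis using K[OF U] by simp
  next
    case False
    define X where "X = Xnorm a p U"
    have "X \<ge> 0" unfolding X_def by (rule Xnorm_nonneg[OF anon])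
    then have Xp: "X > 0" using False X_def by simp
    have vX: "inX p (\<lambda>x. (1 / X) * U x)" using inX_scale[OF U] .
    have "Xnorm a p (\<lambda>x. (1 / X) * U x) = 1" using Xnorm_scale[OF U am p, of "1/X"] Xp X_def by simp
    then have "\<bar>Lf (\<lambda>x. (1 / X) * U x)\<bar> \<in> A" unfolding A_def using vX by auto
    then have "\<bar>Lf (\<lambda>x. (1 / X) * U x)\<bar> \<le> Sup A" using cSup_upper[OF _ bdd] by blast
    moreover have "Lf (\<lambda>x. (1 / X) * U x) = Lf U / X" using lin[OF U, of "1/X"] by simp
    ultimately have "\<bar>Lf U\<bar> / X \<le> Sup A" using Xp by simp
    then show ?thesis using Xp S X_def by (simp add: divide_le_eq mult.commute)
  qed
qed
lemma F_deriv:
  fixes H B C g b p q :: real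
  assumes p: "p > 0" and q: "q > 0"
  shows "((\<lambda>t. 1/2 * (1+t)^2 * H + g * ((1+t) powr p)^2 * B - b * (1+t) powr q * C)
     has_real_derivative (H + g * (2 * p) * B - b * q * C)) (at 0)"
proof -
  have d1: "((\<lambda>t. (1+t) powr p) has_real_derivative p) (at 0)"
    using DERIV_powr[of "\<lambda>t. 1 + t" 1 0 "\<lambda>_. p" 0] by (auto intro!: derivative_eq_intros)
  have d2: "((\<lambda>t. (1+t) powr q) has_real_derivative q) (at 0)"
    using DERIV_powr[of "\<lambda>t. 1 + t" 1 0 "\<lambda>_. q" 0] by (auto intro!: derivative_eq_intros)
  have d0: "((\<lambda>t. (1+t)^2) has_real_derivative 2) (at (0::real))"
    by (auto intro!: derivative_eq_intros)
  have d3: "((\<lambda>t. ((1+t) powr p)^2) has_real_derivative 2 * p) (at 0)"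
    using DERIV_power[OF d1, of 2] by simp
  show ?thesis
    using DERIV_diff[OF DERIV_add[OF DERIV_cmult[OF DERIV_cmult[OF d0, of "1/2"], of H] DERIV_cmult[OF DERIV_cmult[OF d3, of g], of B]]
       DERIV_cmult[OF DERIV_cmult[OF d2, of b], of C]]
    by (simp add: algebra_simps)
qed

lemma Lu_value:
  assumes Xd: "X_deriv a p (Ifun a \<gamma> b p q) U Lf" and U: "inX p U" and anon: "\<And>x. a x \<ge> 0"
    and am: "a \<in> borel_measurable lborel" and p: "p > 0" and q: "q > 0"
  shows "Lf U = (H1norm a U)\<^sup>2 + \<gamma> / (2 * pi) * Bint p U - b * Cint q U"
proof -
  have hU: "H1 U" using U unfolding inX_def by auto
  define H where "H = (H1norm a U)\<^sup>2"
  define B where "B = Bint p U"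
  define C where "C = Cint q U"
  define X where "X = Xnorm a p U"
  have X0: "X \<ge> 0" unfolding X_def by (rule Xnorm_nonneg[OF anon])
  define F where "F = (\<lambda>t::real. 1/2 * (1+t)^2 * H + \<gamma> / (4 * p * pi) * ((1+t) powr p)^2 * B - b / q * (1+t) powr q * C)"
  have hF: "Ifun a \<gamma> b p q (\<lambda>x. (1+t) * U x) = F t" if "t > -1" for t
    using Ifun_scale[OF hU am, of "1+t" \<gamma> b p q] that unfolding F_def H_def B_def C_def by simp
  have F0: "Ifun a \<gamma> b p q U = F 0"
    using hF[of 0] by simp
  have lin0: "\<forall>c v. inX p v \<longrightarrow> Lf (\<lambda>x. c * v x) = c * Lf v"
    using Xd unfolding X_deriv_def by (rule conjunct1[OF conjunct2])
  note lin = lin0[rule_format]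
  have fr: "\<forall>\<epsilon>>0. \<exists>\<delta>>0. \<forall>v. inX p v \<longrightarrow> Xnorm a p v < \<delta> \<longrightarrow>
        \<bar>Ifun a \<gamma> b p q (\<lambda>x. U x + v x) - Ifun a \<gamma> b p q U - Lf v\<bar> \<le> \<epsilon> * Xnorm a p v"
    using Xd unfolding X_deriv_def by (rule conjunct2[OF conjunct2[OF conjunct2]])
  have D: "(F has_real_derivative (H + \<gamma> / (4 * p * pi) * (2 * p) * B - b / q * q * C)) (at 0)"
    unfolding F_def by (rule F_deriv[OF p q])
  then have lim1: "((\<lambda>t. (F (0 + t) - F 0) / t) \<longlongrightarrow> H + \<gamma> / (4 * p * pi) * (2 * p) * B - b / q * q * C) (at 0)"
    by (simp add: DERIV_def)
  have lim2: "((\<lambda>t. (F (0 + t) - F 0) / t) \<longlongrightarrow> Lf U) (at 0)"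
    unfolding LIM_eq
  proof (intro allI impI)
    fix r :: real assume r: "r > 0"
    define \<epsilon> where "\<epsilon> = r / (2 * (X + 1))"
    have e: "\<epsilon> > 0" unfolding \<epsilon>_def using r X0 by simp
    obtain \<delta> where d: "\<delta> > 0" and dd: "\<forall>v. inX p v \<longrightarrow> Xnorm a p v < \<delta> \<longrightarrow>
        \<bar>Ifun a \<gamma> b p q (\<lambda>x. U x + v x) - Ifun a \<gamma> b p q U - Lf v\<bar> \<le> \<epsilon> * Xnorm a p v"
      using fr e by blast
    define s where "s = min (1/2) (\<delta> / (X + 1))"
    have s: "s > 0" unfolding s_def using d X0 by simp
    show "\<exists>s>0. \<forall>t. t \<noteq> 0 \<and> norm (t - 0) < s \<longrightarrow> norm ((F (0 + t) - F 0) / t - Lf U) < r"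
    proof (intro exI[of _ s] conjI allI impI s)
      fix t :: real assume t: "t \<noteq> 0 \<and> norm (t - 0) < s"
      have ta: "\<bar>t\<bar> < s" using t by simp
      have t1: "t > -1" using ta s_def by linarith
      have vX: "inX p (\<lambda>x. t * U x)" by (rule inX_scale[OF U])
      have xv: "Xnorm a p (\<lambda>x. t * U x) = \<bar>t\<bar> * X" unfolding X_def by (rule Xnorm_scale[OF U am p])
      have "\<bar>t\<bar> * X \<le> \<bar>t\<bar> * (X + 1)" by (simp add: mult_left_mono)
      also have "\<dots> < (\<delta> / (X + 1)) * (X + 1)"
        using ta s_def X0 by (intro mult_strict_right_mono) auto
      also have "\<dots> = \<delta>" using X0 by simp
      finally have "Xnorm a p (\<lambda>x. t * U x) < \<delta>" using xv by simp
      with dd vX have est: "\<bar>Ifun a \<gamma> b p q (\<lambda>x. U x + t * U x) - Ifun a \<gamma> b p q U - Lf (\<lambda>x. t * U x)\<bar> \<le> \<epsilon> * (\<bar>t\<bar> * X)"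
        using xv by auto
      have "(\<lambda>x. U x + t * U x) = (\<lambda>x. (1 + t) * U x)" by (simp add: algebra_simps)
      then have "Ifun a \<gamma> b p q (\<lambda>x. U x + t * U x) = F t" using hF[OF t1] by simp
      then have est2: "\<bar>F t - F 0 - t * Lf U\<bar> \<le> \<epsilon> * (\<bar>t\<bar> * X)"
        using est F0 lin[OF U, of t] by simp
      have "(F (0 + t) - F 0) / t - Lf U = (F t - F 0 - t * Lf U) / t"
        using t by (simp add: field_simps)
      then have "norm ((F (0 + t) - F 0) / t - Lf U) = \<bar>F t - F 0 - t * Lf U\<bar> / \<bar>t\<bar>"
        by simp
      also have "\<dots> \<le> \<epsilon> * (\<bar>t\<bar> * X) / \<bar>t\<bar>"
        using est2 by (intro divide_right_mono) auto
      also have "\<dots> = \<epsilon> * X" using t by simp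
      also have "\<dots> < r"
      proof -
        have "\<epsilon> * X = r * X / (2 * (X + 1))" unfolding \<epsilon>_def by simp
        also have "\<dots> < r" using r X0 by (simp add: divide_less_eq)
        finally show ?thesis .
      qed
      finally show "norm ((F (0 + t) - F 0) / t - Lf U) < r" .
    qed
  qed
  have "Lf U = H + \<gamma> / (4 * p * pi) * (2 * p) * B - b / q * q * C"
    using tendsto_unique[OF _ lim2 lim1] by simp
  then show ?thesis unfolding H_def B_def C_def using p q by (simp add: field_simps)
qed




lemma key_ineq:
  fixes H I Lv B C S X \<gamma> b p q :: real
  assumes p: "p \<ge> 2" and q: "q \<ge> 2 * p" and b: "b \<ge> 0" and C: "C \<ge> 0"
    and I: "I = 1/2 * H^2 + \<gamma> / (4 * p * pi) * B - b / q * C"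
    and Lv: "Lv = H^2 + \<gamma> / (2 * pi) * B - b * C"
    and LS: "\<bar>Lv\<bar> \<le> S * X" and S: "S \<ge> 0" and X: "X \<ge> 0"
  shows "H^2 / 4 \<le> I + S * (1 + X)"
proof -
  have pp: "p > 0" using p by simp
  have qq: "q > 0" using q p by simp
  have eq: "I - Lv / (2 * p) = H^2 * (1/2 - 1/(2*p)) + b * C * (1/(2*p) - 1/q)"
    unfolding I Lv using pp qq by (simp add: field_simps)
  have c1: "1/(2*p) - 1/q \<ge> 0"
  proof -
    have "1/q \<le> 1/(2*p)" using q pp by (intro divide_left_mono) auto
    then show ?thesis by simp
  qed
  have t2: "b * C * (1/(2*p) - 1/q) \<ge> 0" using b C c1 by simp
  have c2: "1/2 - 1/(2*p) \<ge> 1/4"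
  proof -
    have "1/(2*p) \<le> 1/4" using p by (simp add: divide_le_eq)
    then show ?thesis by simp
  qed
  have t1: "H^2 / 4 \<le> H^2 * (1/2 - 1/(2*p))"
    using mult_left_mono[OF c2, of "H^2"] by simp
  have t3: "- (Lv / (2 * p)) \<le> \<bar>Lv\<bar>"
  proof -
    have "\<bar>Lv\<bar> * 1 \<le> \<bar>Lv\<bar> * (2 * p)" using p by (intro mult_left_mono) auto
    then have "\<bar>Lv\<bar> / (2 * p) \<le> \<bar>Lv\<bar>" using p by (simp add: divide_le_eq)
    moreover have "(- Lv) / (2 * p) \<le> \<bar>Lv\<bar> / (2 * p)"
      by (rule divide_right_mono) (use pp in auto)
    then have "- (Lv / (2 * p)) \<le> \<bar>Lv\<bar> / (2 * p)" by simp
    ultimately show ?thesis by linarith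
  qed
  have t4: "S * X \<le> S * (1 + X)" using S by (simp add: mult_left_mono)
  show ?thesis using eq t1 t2 t3 t4 LS by linarith
qed

theorem lemma3p5:
  fixes a :: "R2 \<Rightarrow> real" and \<gamma> b p q d :: real and u :: "nat \<Rightarrow> R2 \<Rightarrow> real"
  assumes a_cont: "continuous_on UNIV a"
    and a_per: "\<forall>x k. (\<forall>i. k $ i \<in> \<int>) \<longrightarrow> a (x + k) = a x"
    and a_pos: "(INF x. a x) > 0"
    and "\<gamma> > 0" and "b \<ge> 0" and "p \<ge> 2" and "q \<ge> 2 * p"
    and uX: "\<forall>n. inX p (u n)"
    and lim: "(\<lambda>n. Ifun a \<gamma> b p q (u n)) \<longlonglongrightarrow> d" and "d > 0"
    and PS: "\<exists>L. (\<forall>n. X_deriv a p (Ifun a \<gamma> b p q) (u n) (L n)) \<and>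
               (\<lambda>n. dual_normX a p (L n) * (1 + Xnorm a p (u n))) \<longlonglongrightarrow> 0"
  shows "\<exists>C. \<forall>n. H1norm a (u n) \<le> C"
proof -
  obtain L where Ld: "\<And>n. X_deriv a p (Ifun a \<gamma> b p q) (u n) (L n)"
    and Llim: "(\<lambda>n. dual_normX a p (L n) * (1 + Xnorm a p (u n))) \<longlonglongrightarrow> 0"
    using PS by blast
  have am: "a \<in> borel_measurable lborel" by (rule cont_meas[OF a_cont])
  have bdd: "bdd_below (range a)" by (rule per_bdd[OF a_cont a_per])
  have anon: "a x \<ge> 0" for x
  proof -
    have "(INF x. a x) \<le> a x" by (rule cINF_lower[OF bdd]) simp
    then show ?thesis using a_pos by simp
  qed
  have pp: "p > 0" using \<open>p \<ge> 2\<close> by simp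
  have qq: "q > 0" using \<open>q \<ge> 2 * p\<close> pp by simp
  have key: "(H1norm a (u n))^2 / 4 \<le> Ifun a \<gamma> b p q (u n) + dual_normX a p (L n) * (1 + Xnorm a p (u n))" for n
  proof (rule key_ineq[OF \<open>p \<ge> 2\<close> \<open>q \<ge> 2 * p\<close> \<open>b \<ge> 0\<close>])
    show "Cint q (u n) \<ge> 0" unfolding Cint_def by (intro Bochner_Integration.integral_nonneg) auto
    show "Ifun a \<gamma> b p q (u n) = 1/2 * (H1norm a (u n))^2 + \<gamma> / (4 * p * pi) * Bint p (u n) - b / q * Cint q (u n)"
      by (rule Ifun_alt)
    show "L n (u n) = (H1norm a (u n))^2 + \<gamma> / (2 * pi) * Bint p (u n) - b * Cint q (u n)"
      by (rule Lu_value[OF Ld uX[rule_format] anon am pp qq])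
    show "\<bar>L n (u n)\<bar> \<le> dual_normX a p (L n) * Xnorm a p (u n)"
      by (rule dual_bound(1)[OF Ld uX[rule_format] anon am pp])
    show "0 \<le> dual_normX a p (L n)"
      by (rule dual_bound(2)[OF Ld uX[rule_format] anon am pp])
    show "0 \<le> Xnorm a p (u n)" by (rule Xnorm_nonneg[OF anon])
  qed
  obtain K1 where K1: "\<And>n. norm (Ifun a \<gamma> b p q (u n)) \<le> K1"
    using convergent_imp_Bseq[OF convergentI[OF lim]] unfolding Bseq_def by blast
  obtain K2 where K2: "\<And>n. norm (dual_normX a p (L n) * (1 + Xnorm a p (u n))) \<le> K2"
    using convergent_imp_Bseq[OF convergentI[OF Llim]] unfolding Bseq_def by blast
  show ?thesis
  proof (intro exI[of _ "sqrt (4 * (K1 + K2))"] allI)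
    fix n
    have "(H1norm a (u n))^2 \<le> 4 * (K1 + K2)"
      using key[of n] K1[of n] K2[of n] by simp
    then have "sqrt ((H1norm a (u n))^2) \<le> sqrt (4 * (K1 + K2))" by (rule real_sqrt_le_mono)
    then show "H1norm a (u n) \<le> sqrt (4 * (K1 + K2))" by simp
  qed
qed


end
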